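(* Let $M\ge 2$ be an integer. Take all $M-1$ identifiers of one group (anchor position $g$) and one identifier from a different group (anchor position $g'\neq g$). Then the $M\times M$ integer matrix whose rows are the corresponding coefficient vectors $\big(2^{\,M-1-r_1},\dots,2^{\,M-1-r_M}\big)$ has rank $M$ (over $\mathbb{Q}$), i.e. the encoded packet from the different group is linearly independent of the encoded packets of the group.
   Context: A batch of $M$ data packets $c_1,\dots,c_M$ is encoded as follows: an encoded packet is specified by an identifier $(r_1,\dots,r_M)$ of nonnegative integers; each packet $c_m$ is padded with $r_m$ zero bits at its head (and zeros at its tail so all have equal length), which in ordinary integer arithmetic amounts to forming $2^{r_{\max}-r_m}c_m$ with $r_{\max}=\max_m r_m$, and the padded packets are XORed. The coefficient vector of the encoded packet is $(2^{r_{\max}-r_1},\dots,2^{r_{\max}-r_M})$, and ranks are computed in ordinary (rational) arithmetic. In the (first-round) construction, every identifier is a bijection $\{1,\dots,M\}\to\{0,1,\dots,M-1\}$ (so $r_{\max}=M-1$), and the identifiers are arranged into $M$ groups indexed by an anchor position $g\in\{1,\dots,M\}$: the group with anchor position $g$ consists of the $M-1$ identifiers with $r_g=0$ whose entries at the positions other than $g$, read in increasing order of position, form the cyclic right shifts by $k=0,1,\dots,M-2$ of $(1,2,\dots,M-1)$. For example, the group with anchor $1$ is $(0,1,2,\dots,M-1),(0,M-1,1,\dots,M-2),\dots,(0,2,3,\dots,M-1,1)$, and the group with anchor $2$ starts with $(1,0,2,3,\dots,M-1)$. *)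

theory Defs
  imports "Jordan_Normal_Form.DL_Rank"
begin

text \<open>Identifier of the group with anchor position g (positions 1..M), shift k (0 <= k <= M-2),
  evaluated at position p: r_g = 0, and the positions other than g, read in increasing order
  (index j = 0..M-2), carry the cyclic right shift by k of (1,2,...,M-1),
  i.e. the entry at index j is 1 + ((j - k) mod (M-1)).\<close>
definition ident :: "nat \<Rightarrow> nat \<Rightarrow> nat \<Rightarrow> nat \<Rightarrow> nat" where
  "ident M g k p =
     (if p = g then 0
      else (let j = (if p < g then p - 1 else p - 2)
            in 1 + nat ((int j - int k) mod int (M - 1))))"

definition coef :: "nat \<Rightarrow> (nat \<Rightarrow> nat) \<Rightarrow> nat \<Rightarrow> rat" where
  "coef M r p = 2 ^ (M - 1 - r p)"

text \<open>Row/column indices are 0-based; column j is position j+1.\<close>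
definition code_matrix :: "nat \<Rightarrow> nat \<Rightarrow> nat \<Rightarrow> nat \<Rightarrow> rat mat" where
  "code_matrix M g g' k' =
     mat M M (\<lambda>(i, j). if i < M - 1 then coef M (ident M g i) (j + 1)
                       else coef M (ident M g' k') (j + 1))"

end

theory Submission imports Defs begin

definition dd :: "nat \<Rightarrow> nat \<Rightarrow> nat \<Rightarrow> nat" where
  "dd N k jj = nat ((int jj - int k) mod int N)"
definition colG :: "nat \<Rightarrow> nat \<Rightarrow> nat" where
  "colG G jj = (if jj < G - 1 then jj else Suc jj)"

lemma col_bij: assumes "1 \<le> G" "G \<le> Suc N"
  shows "bij_betw (colG G) {..<N} ({..<Suc N} - {G-1})"
  apply (rule bij_betw_byWitness[where f'="\<lambda>j. if j < G - 1 then j else j - 1"])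
  using assms by (auto simp: colG_def)

lemma split_sum: assumes "1 \<le> G" "G \<le> Suc N"
  shows "(\<Sum>j<Suc N. h j) = h (G-1) + (\<Sum>jj<N. h (colG G jj))"
proof -
  have "(\<Sum>j<Suc N. h j) = h (G-1) + sum h ({..<Suc N} - {G-1})"
    using assms by (subst sum.remove[of _ "G-1"]) auto
  also have "sum h ({..<Suc N} - {G-1}) = (\<Sum>jj<N. h (colG G jj))"
    using sum.reindex_bij_betw[OF col_bij[OF assms], of h] by simp
  finally show ?thesis .
qed

lemma coef_anchor: "coef (Suc N) (ident (Suc N) G k) G = 2^N"
  by (simp add: coef_def ident_def)

lemma coef_col: assumes "jj < N" "1 \<le> G"
  shows "coef (Suc N) (ident (Suc N) G k) (Suc (colG G jj)) = 2^(N - 1 - dd N k jj)"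
  using assms by (auto simp: coef_def ident_def colG_def dd_def Let_def)

lemma coef_other: assumes "p \<noteq> G" "N \<ge> 1"
  shows "coef (Suc N) (ident (Suc N) G k) p < 2^N"
  using assms by (auto simp: coef_def ident_def Let_def)

lemma dd_N: "dd N N jj = dd N 0 jj"
  by (simp add: dd_def)

lemma dd_shift: assumes "i < N" "jj < N"
  shows "(2::rat)^(N-1-dd N (Suc i) jj) - 2*2^(N-1-dd N i jj) = (if jj = i then 1 - 2^N else 0)"
proof -
  have N0: "N > 0" using assms by simp
  obtain m where m: "dd N i jj = Suc m" "dd N (Suc i) jj = m" "m < N - 1" if "jj \<noteq> i"
  proof (cases "i < jj")
    case True
    have a: "(int jj - int i) mod int N = int jj - int i" using assms True by (intro mod_pos_pos_trivial) auto
    have b: "(int jj - int (Suc i)) mod int N = int jj - int (Suc i)" using assms True by (intro mod_pos_pos_trivial) auto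
    have a': "dd N i jj = jj - i" unfolding dd_def a using True by simp
    have b': "dd N (Suc i) jj = jj - Suc i" unfolding dd_def b using True by simp
    show ?thesis
      by (rule that[of "jj - Suc i"]) (use a' b' True assms in simp_all)
  next
    case False
    have a: "(int jj - int i) mod int N = int jj - int i + int N" if "jj \<noteq> i"
    proof -
      have "(int jj - int i) mod int N = (int jj - int i + int N) mod int N" by simp
      also have "\<dots> = int jj - int i + int N" using assms False that by (intro mod_pos_pos_trivial) auto
      finally show ?thesis .
    qed
    have b: "(int jj - int (Suc i)) mod int N = int jj - int (Suc i) + int N" if "jj \<noteq> i"
    proof -
      have "(int jj - int (Suc i)) mod int N = (int jj - int (Suc i) + int N) mod int N" by simp
      also have "\<dots> = int jj - int (Suc i) + int N" using assms False that by (intro mod_pos_pos_trivial) auto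
      finally show ?thesis .
    qed
    have a': "dd N i jj = jj + N - i" if "jj \<noteq> i"
    proof -
      have "int jj - int i + int N = int (jj + N - i)" using assms by (simp add: of_nat_diff)
      then show ?thesis unfolding dd_def a[OF that] by simp
    qed
    have b': "dd N (Suc i) jj = jj + N - Suc i" if "jj \<noteq> i"
    proof -
      have "int jj - int (Suc i) + int N = int (jj + N - Suc i)" using assms by (simp add: of_nat_diff del: of_nat_Suc)
      then show ?thesis unfolding dd_def b[OF that] by simp
    qed
    show ?thesis
      by (rule that[of "jj + N - Suc i"]) (use a' b' False assms in simp_all)
  qed
  show ?thesis
  proof (cases "jj = i")
    case True
    have "(int i - int (Suc i)) mod int N = int N - 1"
    proof -
      have "int i - int (Suc i) = - 1" by simp
      then show ?thesis using zmod_minus1[of "int N"] N0 by simp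
    qed
    then have "dd N (Suc i) i = N - 1" unfolding dd_def using N0 by (simp add: nat_diff_distrib)
    moreover have "dd N i i = 0" by (simp add: dd_def)
    moreover have "(2::rat) * 2^(N-1) = 2^N" using N0 by (metis Suc_diff_1 power_Suc)
    ultimately show ?thesis using True by simp
  next
    case False
    note mm = m[OF False]
    have "N - 1 - m = Suc (N - 1 - Suc m)" using mm(3) by simp
    then show ?thesis using False mm by simp
  qed
qed

lemma dd_int: "N > 0 \<Longrightarrow> int (dd N k a) = (int a - int k) mod int N"
  by (simp add: dd_def)

lemma dd_bij: assumes "k < N"
  shows "bij_betw (dd N k) {..<N} {..<N}"
proof -
  have N0: "N > 0" using assms by simp
  have "inj_on (dd N k) {..<N}"
  proof
    fix a b assume ab: "a \<in> {..<N}" "b \<in> {..<N}" "dd N k a = dd N k b"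
    then have e: "(int a - int k) mod int N = (int b - int k) mod int N"
      using dd_int[OF N0] by metis
    have "int a = ((int a - int k) + int k) mod int N" using ab by simp
    also have "\<dots> = (((int a - int k) mod int N) + int k) mod int N" by (simp add: mod_add_left_eq)
    also have "\<dots> = (((int b - int k) mod int N) + int k) mod int N" using e by simp
    also have "\<dots> = ((int b - int k) + int k) mod int N" by (simp add: mod_add_left_eq)
    also have "\<dots> = int b" using ab by simp
    finally show "a = b" by simp
  qed
  moreover have "dd N k ` {..<N} \<subseteq> {..<N}"
  proof
    fix d assume "d \<in> dd N k ` {..<N}"
    then obtain a where "d = dd N k a" by auto
    then have "int d = (int a - int k) mod int N" using dd_int[OF N0] by simp
    also have "\<dots> < int N" using N0 by simp
    finally show "d \<in> {..<N}" by simp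
  qed
  ultimately show ?thesis
    by (simp add: bij_betw_def endo_inj_surj)
qed

lemma geom: "(\<Sum>d<N. (2::rat)^(N-1-d)) = 2^N - 1"
proof -
  have "(\<Sum>d<N. (2::rat)^(N-1-d)) = (\<Sum>d<N. (2::rat)^d)"
    using sum.nat_diff_reindex[of "\<lambda>d. (2::rat)^d" N] by simp
  also have "\<dots> = 2^N - 1" by (induction N) auto
  finally show ?thesis .
qed

lemma sum_row: assumes "k < N"
  shows "(\<Sum>jj<N. (2::rat)^(N-1-dd N k jj)) = 2^N - 1"
  using sum.reindex_bij_betw[OF dd_bij[OF assms], of "\<lambda>d. (2::rat)^(N-1-d)"] geom by simp

lemma mat_vec_sum: assumes "A \<in> carrier_mat n n" "v \<in> carrier_vec n" "i < n"
  shows "(A *\<^sub>v v) $ i = (\<Sum>j<n. A $$ (i,j) * v $ j)"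
  using assms by (auto simp: scalar_prod_def lessThan_atLeast0 intro!: sum.cong)

theorem lemma2:
  fixes M g g' k' :: nat
  assumes "M \<ge> 2"
    and "g \<in> {1..M}" and "g' \<in> {1..M}" and "g' \<noteq> g"
    and "k' \<le> M - 2"
  shows "vec_space.rank M (code_matrix M g g' k') = M"
proof -
  obtain N where MN: "M = Suc N" using assms(1) by (cases M) auto
  have N1: "N \<ge> 1" using assms(1) MN by simp
  let ?A = "code_matrix M g g' k'"
  have Ac: "?A \<in> carrier_mat M M" by (simp add: code_matrix_def)
  have g1: "1 \<le> g" "g \<le> Suc N" and g'1: "1 \<le> g'" "g' \<le> Suc N" using assms MN by auto
  have k'N: "k' < N" using assms(5) MN N1 by simp
  have entry_g: "?A $$ (i,j) = coef M (ident M g i) (j+1)" if "i < N" "j < M" for i j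
    using that MN by (simp add: code_matrix_def)
  have entry_l: "?A $$ (N,j) = coef M (ident M g' k') (j+1)" if "j < M" for j
    using that MN by (simp add: code_matrix_def)
  have Ag: "?A $$ (i, g-1) = 2^N" if "i < N" for i
  proof -
    have "?A $$ (i, g-1) = coef M (ident M g i) (g - 1 + 1)" using that g1 MN by (intro entry_g) auto
    also have "g - 1 + 1 = g" using g1 by simp
    finally show ?thesis using coef_anchor MN by simp
  qed
  have Acol: "?A $$ (i, colG g jj) = 2^(N-1-dd N i jj)" if "i < N" "jj < N" for i jj
  proof -
    have "colG g jj < M" using that MN g1 by (simp add: colG_def)
    then have "?A $$ (i, colG g jj) = coef M (ident M g i) (Suc (colG g jj))" using that entry_g by simp
    then show ?thesis using coef_col[OF that(2) g1(1)] MN by simp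
  qed
  have ker: "v = 0\<^sub>v M" if v: "v \<in> carrier_vec M" and Av: "?A *\<^sub>v v = 0\<^sub>v M" for v
  proof -
    define x where "x = v $ (g-1)"
    define y where "y = (\<lambda>jj. v $ colG g jj)"
    define F where "F = (\<lambda>i. \<Sum>jj<N. (2::rat)^(N-1-dd N i jj) * y jj)"
    have eq: "2^N * x + F i = 0" if "i < N" for i
    proof -
      have "0 = (?A *\<^sub>v v) $ i" using Av that MN by simp
      also have "\<dots> = (\<Sum>j<Suc N. ?A $$ (i,j) * v $ j)" using mat_vec_sum[OF Ac v] that MN by simp
      also have "\<dots> = ?A $$ (i,g-1) * v $ (g-1) + (\<Sum>jj<N. ?A $$ (i,colG g jj) * v $ colG g jj)"
        by (rule split_sum[OF g1])
      also have "\<dots> = 2^N * x + F i"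
        unfolding F_def x_def y_def
        using that Ag[OF that] by (simp add: Acol)
      finally show ?thesis by simp
    qed
    have FN: "F N = F 0" unfolding F_def by (simp add: dd_N)
    have Fs: "F (Suc i) = - (2^N * x)" if "i < N" for i
    proof (cases "Suc i < N")
      case True then show ?thesis using eq[of "Suc i"] by simp
    next
      case False then have "Suc i = N" using that by simp
      then show ?thesis using FN eq[of 0] N1 by simp
    qed
    have diff: "F (Suc i) - 2 * F i = (1 - 2^N) * y i" if "i < N" for i
    proof -
      have "F (Suc i) - 2 * F i = (\<Sum>jj<N. ((2::rat)^(N-1-dd N (Suc i) jj) - 2*2^(N-1-dd N i jj)) * y jj)"
        unfolding F_def by (simp add: sum_distrib_left sum_subtractf algebra_simps)
      also have "\<dots> = (\<Sum>jj<N. (if jj = i then (1 - 2^N) * y jj else 0))"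
        using dd_shift[OF that] by (intro sum.cong) auto
      also have "\<dots> = (1 - 2^N) * y i" using that by simp
      finally show ?thesis .
    qed
    define c where "c = 2^N * x / (1 - 2^N)"
    have ne: "(1 - 2^N :: rat) \<noteq> 0"
    proof -
      have "(2::rat) \<le> 2^N" using N1 by (metis power_one_right power_increasing one_le_numeral)
      then show ?thesis by simp
    qed
    have yc: "y i = c" if "i < N" for i
    proof -
      have "(1 - 2^N) * y i = 2^N * x" using diff[OF that] Fs[OF that] eq[OF that] by simp
      then show ?thesis unfolding c_def using ne by (simp add: field_simps)
    qed
    define B where "B = (\<lambda>j. coef M (ident M g' k') (j+1))"
    have Bsum: "(\<Sum>j<Suc N. B j) = 2^N + (2^N - 1)"
    proof -
      have "(\<Sum>j<Suc N. B j) = B (g'-1) + (\<Sum>jj<N. B (colG g' jj))" by (rule split_sum[OF g'1])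
      also have "\<dots> = 2^N + (\<Sum>jj<N. (2::rat)^(N-1-dd N k' jj))"
        unfolding B_def using g'1 MN coef_anchor coef_col by (auto intro!: sum.cong)
      finally show ?thesis using sum_row[OF k'N] by simp
    qed
    have Bg: "B (g-1) < 2^N" unfolding B_def using coef_other[of g g' N k'] assms g1 N1 MN by simp
    have "0 = (?A *\<^sub>v v) $ N" using Av MN by simp
    also have "\<dots> = (\<Sum>j<Suc N. B j * v $ j)" using mat_vec_sum[OF Ac v] MN entry_l B_def by simp
    also have "\<dots> = B (g-1) * x + (\<Sum>jj<N. B (colG g jj) * y jj)"
      unfolding x_def y_def by (rule split_sum[OF g1])
    also have "\<dots> = B (g-1) * x + c * (\<Sum>jj<N. B (colG g jj))"
      using yc by (simp add: sum_distrib_left mult.commute)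
    also have "(\<Sum>jj<N. B (colG g jj)) = (2^N + (2^N - 1)) - B (g-1)"
      using split_sum[OF g1, of B] Bsum by simp
    finally have last: "B (g-1) * x + c * ((2^N + (2^N - 1)) - B (g-1)) = 0" by simp
    have "x * ((2 * 2^N - 1) * (2^N - B (g-1))) = 0"
    proof -
      define P :: rat where "P = 2^N"
      define b where "b = B (g-1)"
      have h1: "(1 - P) * (b * x + c * ((P + (P - 1)) - b)) = 0" using last unfolding P_def b_def by simp
      have h2: "(1 - P) * c = P * x" unfolding c_def P_def using ne by simp
      have "(1 - P) * (b * x + c * ((P + (P - 1)) - b)) = (1 - P) * b * x + (2*P - 1 - b) * ((1 - P) * c)"
        by (simp add: algebra_simps)
      also have "\<dots> = x * ((2 * P - 1) * (P - b))" unfolding h2 by (simp add: algebra_simps)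
      finally show ?thesis using h1 unfolding P_def b_def by simp
    qed
    moreover have "(2 * 2^N - 1 :: rat) \<noteq> 0"
    proof -
      have "(1::rat) \<le> 2^N" by simp
      then show ?thesis by linarith
    qed
    ultimately have x0: "x = 0" using Bg by simp
    then have c0: "c = 0" unfolding c_def by simp
    show ?thesis
    proof (rule eq_vecI)
      show "dim_vec v = dim_vec (0\<^sub>v M)" using v by simp
      fix j assume "j < dim_vec (0\<^sub>v M)"
      then have j: "j < Suc N" using MN by simp
      show "v $ j = 0\<^sub>v M $ j"
      proof (cases "j = g - 1")
        case True then show ?thesis using x0 x_def j MN by simp
      next
        case False
        then have "j \<in> {..<Suc N} - {g-1}" using j by simp
        then obtain jj where "jj < N" "j = colG g jj"
          using col_bij[OF g1] by (auto simp: bij_betw_def)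
        then show ?thesis using yc c0 y_def j MN by simp
      qed
    qed
  qed
  have "det ?A \<noteq> 0" using det_0_iff_vec_prod_zero_field[OF Ac] ker by blast
  then show ?thesis using vec_space.low_rank_det_zero[OF Ac] by blast
qed

end
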